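(* Suppose $f\colon[0,\infty)\to[0,\infty)$ satisfies (M), (S) and (L). For $k>0$ set $g(\sigma)=F^{-1}(\sigma^k)$ for $\sigma\in(0,F_0^{1/k})$. Then there exists $\sigma_*>0$ such that $g$ is convex on $(0,\sigma_* )$.
   Context: (M) $f$ continuous, nondecreasing, $f(u)>0$ for $u>0$. (S) there is $\tau_0>0$ with $f\in C^1([\tau_0,\infty))$ and $\int_{\tau_0}^\infty ds/f(s)<\infty$. $F(u)=\int_u^\infty ds/f(s)$ for $u>0$, $F_0=\lim_{u\to0}F(u)$ (possibly $\infty$); $F^{-1}\colon(0,F_0)\to(0,\infty)$ is the inverse of $F$. (L) $q_f:=\lim_{u\to\infty}f'(u)F(u)$ exists and is finite. *)

theory Defs
  imports "HOL-Analysis.Analysis"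
begin

text \<open>F(u) = integral from u to infinity of 1/f (improper integral; the integrand is
positive, so Henstock-Kurzweil integrability on {u..} is convergence of the improper integral).\<close>
definition Fint :: "(real \<Rightarrow> real) \<Rightarrow> real \<Rightarrow> real" where
  "Fint f u = integral {u..} (\<lambda>s. 1 / f s)"

definition F0 :: "(real \<Rightarrow> real) \<Rightarrow> ereal" where
  "F0 f = Lim (at_right 0) (\<lambda>u. ereal (Fint f u))"

definition Finv :: "(real \<Rightarrow> real) \<Rightarrow> real \<Rightarrow> real" where
  "Finv f = inv_into {0<..} (Fint f)"

end

theory Submission
  imports Defs
begin

lemma part1:
  fixes f :: "real \<Rightarrow> real" and \<tau>0 :: real
  assumes M_cont: "continuous_on {0..} f"
    and M_pos: "\<forall>u>0. f u > 0"
    and S_tau: "\<tau>0 > 0"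
    and S_int: "(\<lambda>s. 1 / f s) integrable_on {\<tau>0..}"
  shows "\<forall>u>0. (\<lambda>s. 1 / f s) integrable_on {u..}"
    and "\<forall>a b. 0 < a \<and> a \<le> b \<longrightarrow> Fint f a = integral {a..b} (\<lambda>s. 1 / f s) + Fint f b"
    and "\<forall>u>0. (Fint f has_real_derivative - (1 / f u)) (at u)"
proof -
  let ?h = "\<lambda>s. 1 / f s"
  have hcont: "continuous_on {a..b} ?h" if "a > 0" for a b
    using M_pos that
    by (intro continuous_intros continuous_on_subset[OF M_cont]) (auto, metis less_le_trans less_irrefl)
  have hnn: "\<And>s. s \<ge> \<tau>0 \<Longrightarrow> 0 \<le> ?h s" using M_pos S_tau
    by (smt (verit) divide_nonneg_pos)
  have absint: "?h absolutely_integrable_on {\<tau>0..}"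
    by (rule nonnegative_absolutely_integrable_1[OF S_int]) (use hnn in auto)
  have int1: "?h integrable_on {u..}" if "u \<ge> \<tau>0" for u
  proof -
    have "?h absolutely_integrable_on {u..}"
      by (rule set_integrable_subset[OF absint]) (use that in auto)
    then show ?thesis using absolutely_integrable_on_def by blast
  qed
  show hint: "\<forall>u>0. ?h integrable_on {u..}"
  proof safe
    fix u :: real assume u: "u > 0"
    show "?h integrable_on {u..}"
    proof (cases "u \<ge> \<tau>0")
      case True then show ?thesis using int1 by auto
    next
      case False
      have "?h integrable_on ({u..\<tau>0} \<union> {\<tau>0..})"
        by (rule integrable_Un) (use False int1 integrable_continuous_interval[OF hcont[OF u]] in auto)
      moreover have "{u..\<tau>0} \<union> {\<tau>0..} = {u..}" using False by auto
      ultimately show ?thesis by simp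
    qed
  qed
  show split: "\<forall>a b. 0 < a \<and> a \<le> b \<longrightarrow> Fint f a = integral {a..b} ?h + Fint f b"
  proof safe
    fix a b :: real assume ab: "0 < a" "a \<le> b"
    have "(?h has_integral (integral {a..b} ?h + Fint f b)) ({a..b} \<union> {b..})"
      unfolding Fint_def
      by (rule has_integral_Un) (use ab hint integrable_continuous_interval[OF hcont[OF ab(1)]] in auto)
    moreover have "{a..b} \<union> {b..} = {a..}" using ab by auto
    ultimately show "Fint f a = integral {a..b} ?h + Fint f b"
      unfolding Fint_def[of f a] by (simp add: integral_unique)
  qed
  show "\<forall>u>0. (Fint f has_real_derivative - ?h u) (at u)"
  proof safe
    fix u :: real assume u: "u > 0"
    let ?a = "u/2" and ?b = "u+1"
    have "((\<lambda>x. integral {?a..x} ?h) has_real_derivative ?h u) (at u within {?a..?b})"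
      by (rule integral_has_real_derivative) (use hcont u in auto)
    moreover have "at u within {?a..?b} = at u" using u by (intro at_within_Icc_at) auto
    ultimately have d: "((\<lambda>x. integral {?a..x} ?h) has_real_derivative ?h u) (at u)" by simp
    have "((\<lambda>x. Fint f ?a - integral {?a..x} ?h) has_real_derivative - ?h u) (at u)"
      using d by (auto intro!: derivative_eq_intros)
    then show "(Fint f has_real_derivative - ?h u) (at u)"
    proof (rule has_field_derivative_transform_within_open[where S="{?a<..}"])
      show "u \<in> {?a<..}" using u by auto
      show "open {?a<..}" by simp
      fix x assume "x \<in> {?a<..}"
      then show "Fint f ?a - integral {?a..x} ?h = Fint f x"
        using split u by (smt (verit, best) greaterThan_iff half_gt_zero)
    qed
  qed
qed

lemma Fzero:
  fixes f :: "real \<Rightarrow> real" and \<tau>0 :: real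
  assumes hint: "\<forall>u>0. (\<lambda>s. 1 / f s) integrable_on {u..}"
    and M_pos: "\<forall>u>0. f u > 0"
    and S_tau: "\<tau>0 > 0"
    and eps: "\<epsilon> > 0"
  shows "\<exists>u\<ge>\<tau>0. Fint f u < \<epsilon>"
proof -
  let ?h = "\<lambda>s. 1 / f s"
  define g where "g = (\<lambda>(k::nat) x. if x \<in> {\<tau>0 + real k..} then ?h x else 0)"
  have eqI: "integral {\<tau>0..} (g k) = Fint f (\<tau>0 + real k)" for k
  proof -
    have "{\<tau>0 + real k..} \<inter> {\<tau>0..} = {\<tau>0 + real k..}" by auto
    then show ?thesis unfolding g_def Fint_def integral_restrict_Int by simp
  qed
  have "(\<lambda>k. integral {\<tau>0..} (g k)) \<longlonglongrightarrow> integral {\<tau>0..} (\<lambda>x. 0::real)"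
  proof (rule dominated_convergence(2))
    fix k show "g k integrable_on {\<tau>0..}"
    proof -
      have "{\<tau>0 + real k..} \<inter> {\<tau>0..} = {\<tau>0 + real k..}" by auto
      then show ?thesis unfolding g_def integrable_restrict_Int using hint S_tau
        by (metis add_pos_nonneg of_nat_0_le_iff)
    qed
  next
    show "?h integrable_on {\<tau>0..}" using hint S_tau by auto
  next
    fix k x assume "x \<in> {\<tau>0..}"
    then show "norm (g k x) \<le> ?h x" unfolding g_def using M_pos S_tau
      by (auto simp: abs_of_pos) (metis less_le_trans less_imp_le)
  next
    fix x :: real
    obtain N :: nat where N: "x - \<tau>0 < real N" using reals_Archimedean2 by blast
    have "eventually (\<lambda>k. g k x = 0) sequentially"
      using eventually_ge_at_top[of N]
      by eventually_elim (use N in \<open>auto simp: g_def\<close>)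
    then show "(\<lambda>k. g k x) \<longlonglongrightarrow> 0" by (rule tendsto_eventually)
  qed
  then have "(\<lambda>k. Fint f (\<tau>0 + real k)) \<longlonglongrightarrow> 0" using eqI by simp
  then obtain k where "\<bar>Fint f (\<tau>0 + real k)\<bar> < \<epsilon>"
    using eps by (metis LIMSEQ_D diff_zero order_refl real_norm_def)
  then show ?thesis by (intro exI[of _ "\<tau>0 + real k"]) auto
qed

lemma Fmono:
  fixes f :: "real \<Rightarrow> real"
  assumes Fder: "\<forall>u>0. (Fint f has_real_derivative - (1 / f u)) (at u)"
    and M_pos: "\<forall>u>0. f u > 0"
    and ab: "0 < a" "a < b"
  shows "Fint f b < Fint f a"
proof (rule DERIV_neg_imp_decreasing[OF ab(2)])
  fix x assume "a \<le> x" "x \<le> b"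
  then have "x > 0" using ab by auto
  then show "\<exists>y. (Fint f has_real_derivative y) (at x) \<and> y < 0"
    using Fder M_pos by (intro exI[of _ "- (1 / f x)"]) auto
qed

lemma Fpos:
  fixes f :: "real \<Rightarrow> real"
  assumes Fder: "\<forall>u>0. (Fint f has_real_derivative - (1 / f u)) (at u)"
    and hint: "\<forall>u>0. (\<lambda>s. 1 / f s) integrable_on {u..}"
    and M_pos: "\<forall>u>0. f u > 0"
    and u: "0 < u"
  shows "Fint f u > 0"
proof -
  have "Fint f (u+1) \<ge> 0" unfolding Fint_def
    by (rule integral_nonneg) (use hint u M_pos in \<open>auto intro: less_imp_le\<close>)
  moreover have "Fint f (u+1) < Fint f u" by (rule Fmono[OF Fder M_pos u]) auto
  ultimately show ?thesis by linarith
qed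

lemma qge1:
  fixes f f' :: "real \<Rightarrow> real" and \<tau>0 q :: real
  assumes Fder: "\<forall>u>0. (Fint f has_real_derivative - (1 / f u)) (at u)"
    and hint: "\<forall>u>0. (\<lambda>s. 1 / f s) integrable_on {u..}"
    and M_pos: "\<forall>u>0. f u > 0"
    and S_tau: "\<tau>0 > 0"
    and fder: "\<forall>u>\<tau>0. (f has_real_derivative f' u) (at u)"
    and L: "((\<lambda>u. f' u * Fint f u) \<longlongrightarrow> q) at_top"
  shows "q \<ge> 1"
proof (rule ccontr)
  assume "\<not> q \<ge> 1"
  then have q: "q < 1" by simp
  define c where "c = (1 + q) / 2"
  have "q < c" "c < 1" using q by (auto simp: c_def)
  have "eventually (\<lambda>u. f' u * Fint f u < c) at_top"
    using order_tendstoD(2)[OF L \<open>q < c\<close>] .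
  then obtain U where U: "\<And>u. u \<ge> U \<Longrightarrow> f' u * Fint f u < c"
    by (auto simp: eventually_at_top_linorder)
  define U' where "U' = max U (\<tau>0 + 1)"
  define \<phi> where "\<phi> = (\<lambda>u. Fint f u * f u + (1 - c) * u)"
  define x where "x = U' + \<bar>\<phi> U'\<bar> / (1 - c)"
  have U'pos: "U' > \<tau>0" "U' \<ge> U" using S_tau by (auto simp: U'_def)
  have "U' \<le> x" using \<open>c < 1\<close> by (auto simp: x_def)
  have "\<phi> x \<le> \<phi> U'"
  proof (rule DERIV_nonpos_imp_nonincreasing[OF \<open>U' \<le> x\<close>])
    fix y assume y: "U' \<le> y" "y \<le> x"
    then have y0: "y > \<tau>0" "y > 0" "y \<ge> U" using U'pos S_tau by auto
    have "(\<phi> has_real_derivative (- (1 / f y)) * f y + Fint f y * f' y + (1 - c)) (at y)"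
      unfolding \<phi>_def using Fder fder y0
      by (auto intro!: derivative_eq_intros)
    moreover have "(- (1 / f y)) * f y + Fint f y * f' y + (1 - c) \<le> 0"
    proof -
      have "f y > 0" using M_pos y0 by auto
      then have "(- (1 / f y)) * f y = -1" by simp
      then show ?thesis using U[OF y0(3)] by (simp add: mult.commute)
    qed
    ultimately show "\<exists>d. (\<phi> has_real_derivative d) (at y) \<and> d \<le> 0" by blast
  qed
  moreover have "(1 - c) * x \<ge> \<bar>\<phi> U'\<bar>"
  proof -
    have "(1 - c) * x = (1 - c) * U' + \<bar>\<phi> U'\<bar>" using \<open>c < 1\<close> by (simp add: x_def field_simps)
    moreover have "(1 - c) * U' \<ge> 0" using \<open>c < 1\<close> U'pos S_tau by simp
    ultimately show ?thesis by linarith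
  qed
  moreover have "Fint f x * f x > 0"
    using Fpos[OF Fder hint M_pos] M_pos U'pos \<open>U' \<le> x\<close> S_tau by simp
  ultimately show False unfolding \<phi>_def by linarith
qed

theorem lemma3p2:
  fixes f f' :: "real \<Rightarrow> real" and \<tau>0 k q :: real
  assumes nonneg: "\<forall>u\<ge>0. f u \<ge> 0"
    and M_cont: "continuous_on {0..} f"
    and M_mono: "mono_on {0..} f"
    and M_pos: "\<forall>u>0. f u > 0"
    and S_tau: "\<tau>0 > 0"
    and S_deriv: "\<forall>x\<ge>\<tau>0. (f has_real_derivative f' x) (at x within {\<tau>0..})"
    and S_cont: "continuous_on {\<tau>0..} f'"
    and S_int: "(\<lambda>s. 1 / f s) integrable_on {\<tau>0..}"
    and L: "((\<lambda>u. f' u * Fint f u) \<longlongrightarrow> q) at_top"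
    and k: "k > 0"
  shows "\<exists>\<sigma>s>0. ereal (\<sigma>s powr k) \<le> F0 f \<and>
           convex_on {0<..<\<sigma>s} (\<lambda>\<sigma>. Finv f (\<sigma> powr k))"
proof -
  note P1 = part1[OF M_cont M_pos S_tau S_int]
  note hint = P1(1) and Fder = P1(3)
  have fder: "\<forall>u>\<tau>0. (f has_real_derivative f' u) (at u)"
  proof safe
    fix u assume u: "u > \<tau>0"
    have "at u within {\<tau>0..} = at u" using u by (intro at_within_interior) auto
    moreover have "(f has_real_derivative f' u) (at u within {\<tau>0..})" using S_deriv u by simp
    ultimately show "(f has_real_derivative f' u) (at u)" by simp
  qed
  have q1: "q \<ge> 1" by (rule qge1[OF Fder hint M_pos S_tau fder L])
  have "(k - 1) / k < 1" using k by (simp add: field_simps)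
  then have "(k - 1) / k < q" using q1 by linarith
  then have "eventually (\<lambda>u. (k - 1) / k < f' u * Fint f u) at_top"
    using order_tendstoD(1)[OF L] by blast
  then obtain U where U: "\<And>u. u \<ge> U \<Longrightarrow> (k - 1) / k < f' u * Fint f u"
    by (auto simp: eventually_at_top_linorder)
  define T where "T = max U (\<tau>0 + 1)"
  have T: "T > \<tau>0" "T > 0" "T \<ge> U" using S_tau by (auto simp: T_def)
  define FT where "FT = Fint f T"
  have FT: "FT > 0" unfolding FT_def by (rule Fpos[OF Fder hint M_pos T(2)])
  define \<sigma>s where "\<sigma>s = FT powr (1 / k)"
  have \<sigma>s: "\<sigma>s > 0" "\<sigma>s powr k = FT" using FT k by (auto simp: \<sigma>s_def powr_powr)
  have Fstrict: "\<And>a b. 0 < a \<Longrightarrow> a < b \<Longrightarrow> Fint f b < Fint f a"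
    by (rule Fmono[OF Fder M_pos])
  have inj: "inj_on (Fint f) {0<..}"
  proof (rule inj_onI)
    fix x y :: real assume "x \<in> {0<..}" "y \<in> {0<..}" "Fint f x = Fint f y"
    then show "x = y" using Fstrict by (metis greaterThan_iff linorder_neqE_linordered_idom less_irrefl)
  qed
  have GF: "\<And>u. u > 0 \<Longrightarrow> Finv f (Fint f u) = u"
    unfolding Finv_def using inj by (simp add: inv_into_f_f)
  have Fcont: "\<And>u. u > 0 \<Longrightarrow> isCont (Fint f) u" using Fder DERIV_isCont by blast
  have rng: "Finv f y > T \<and> Fint f (Finv f y) = y" if y: "0 < y" "y < FT" for y
  proof -
    obtain u1 where u1: "u1 \<ge> \<tau>0" "Fint f u1 < y" using Fzero[OF hint M_pos S_tau y(1)] by blast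
    define u2 where "u2 = max u1 T"
    have "Fint f u2 \<le> Fint f u1"
      using Fstrict[of u1 u2] S_tau u1 by (cases "u1 < u2") (auto simp: u2_def max_def split: if_splits)
    then have "Fint f u2 \<le> y" "y \<le> Fint f T" "T \<le> u2" using u1 y by (auto simp: u2_def FT_def)
    then obtain x where x: "T \<le> x" "x \<le> u2" "Fint f x = y"
      using IVT2[of "Fint f" u2 y T] Fcont T by force
    have "x \<noteq> T" using x y by (auto simp: FT_def)
    then have "x > T" using x by auto
    then show ?thesis using GF[of x] x T by auto
  qed
  have Gder: "DERIV (Finv f) y :> - f (Finv f y)" if y: "0 < y" "y < FT" for y
  proof -
    let ?G = "Finv f"
    have Gy: "?G y > T" "Fint f (?G y) = y" using rng[OF y] by auto
    have "isCont ?G (Fint f (?G y))"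
    proof (rule isCont_inverse_function[where d="?G y - T" and f="Fint f" and g="?G" and x="?G y"])
      show "0 < ?G y - T" using Gy by simp
    next
      fix z assume "\<bar>z - ?G y\<bar> \<le> ?G y - T"
      then have "z > 0" using T by auto
      then show "?G (Fint f z) = z" using GF by auto
    next
      fix z assume "\<bar>z - ?G y\<bar> \<le> ?G y - T"
      then have "z > 0" using T by auto
      then show "isCont (Fint f) z" using Fcont by auto
    qed
    then have cont: "isCont ?G y" using Gy by simp
    have "DERIV ?G y :> inverse (- (1 / f (?G y)))"
    proof (rule DERIV_inverse_function[where a=0 and b=FT])
      show "DERIV (Fint f) (?G y) :> - (1 / f (?G y))" using Fder Gy T by auto
      have "f (?G y) > 0" using M_pos Gy T by auto
      then show "- (1 / f (?G y)) \<noteq> 0" by simp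
    qed (use y rng cont in auto)
    then show ?thesis by simp
  qed
  define \<psi> where "\<psi> = (\<lambda>u. Fint f u powr ((k - 1) / k) * f u)"
  define g' where "g' = (\<lambda>\<sigma>. - k * \<psi> (Finv f (\<sigma> powr k)))"
  have gder: "((\<lambda>\<sigma>. Finv f (\<sigma> powr k)) has_real_derivative g' \<sigma>) (at \<sigma>)"
    if \<sigma>: "\<sigma> \<in> {0<..<\<sigma>s}" for \<sigma>
  proof -
    let ?y = "\<sigma> powr k"
    have y: "0 < ?y" "?y < FT" using \<sigma> k \<sigma>s by (auto intro!: powr_less_mono2 simp del: \<open>\<sigma>s powr k = FT\<close>)
    have d: "((\<lambda>\<sigma>. Finv f (\<sigma> powr k)) has_real_derivative - f (Finv f ?y) * (k * \<sigma> powr (k - 1))) (at \<sigma>)"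
      by (rule DERIV_chain2[where g="\<lambda>\<sigma>. \<sigma> powr k", OF Gder[OF y]]) (rule has_real_derivative_powr, use \<sigma> in auto)
    have "\<sigma> powr (k - 1) = ?y powr ((k - 1) / k)" using k by (simp add: powr_powr)
    also have "\<dots> = Fint f (Finv f ?y) powr ((k - 1) / k)" using rng[OF y] by simp
    finally have "- f (Finv f ?y) * (k * \<sigma> powr (k - 1)) = g' \<sigma>"
      by (simp add: g'_def \<psi>_def)
    then show ?thesis using d by simp
  qed
  have \<psi>mono: "\<psi> a \<le> \<psi> b" if ab: "T \<le> a" "a \<le> b" for a b
  proof (rule DERIV_nonneg_imp_nondecreasing[OF ab(2)])
    fix x assume x: "a \<le> x" "x \<le> b"
    let ?r = "(k - 1) / k"
    have x0: "x > 0" "x > \<tau>0" "x \<ge> U" using x ab T by auto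
    have Fx: "Fint f x > 0" by (rule Fpos[OF Fder hint M_pos x0(1)])
    have fx: "f x > 0" using M_pos x0 by auto
    have dF: "(Fint f has_real_derivative - (1 / f x)) (at x)" using Fder x0 by auto
    have dP: "((\<lambda>z. z powr ?r) has_real_derivative ?r * Fint f x powr (?r - 1)) (at (Fint f x))"
      by (rule has_real_derivative_powr) (rule Fx)
    have dC: "((\<lambda>u. Fint f u powr ?r) has_real_derivative ?r * Fint f x powr (?r - 1) * (- (1 / f x))) (at x)"
      by (rule DERIV_chain2[where g="Fint f" and f="\<lambda>z. z powr ?r", OF dP dF])
    have d\<psi>: "(\<psi> has_real_derivative
        ?r * Fint f x powr (?r - 1) * (- (1 / f x)) * f x + f' x * Fint f x powr ?r) (at x)"
      unfolding \<psi>_def by (rule DERIV_mult[OF dC]) (use fder x0 in auto)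
    have pw: "Fint f x powr ?r = Fint f x * Fint f x powr (?r - 1)"
      using powr_mult_base[of "Fint f x" "?r - 1"] Fx by simp
    have "?r * Fint f x powr (?r - 1) * (- (1 / f x)) * f x + f' x * Fint f x powr ?r
        = Fint f x powr (?r - 1) * (f' x * Fint f x - ?r)"
      unfolding pw using fx k by (simp add: field_simps)
    moreover note d\<psi>
    moreover have "Fint f x powr (?r - 1) * (f' x * Fint f x - ?r) \<ge> 0"
      using U[OF x0(3)] by simp
    ultimately show "\<exists>y. (\<psi> has_real_derivative y) (at x) \<and> y \<ge> 0" by auto
  qed
  have conv: "convex_on {0<..<\<sigma>s} (\<lambda>\<sigma>. Finv f (\<sigma> powr k))"
  proof (rule convex_on_realI[where f'=g'])
    show "connected {0<..<\<sigma>s}" by simp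
    show "\<And>x. x \<in> {0<..<\<sigma>s} \<Longrightarrow> ((\<lambda>\<sigma>. Finv f (\<sigma> powr k)) has_real_derivative g' x) (at x)"
      by (rule gder)
    fix x y assume xy: "x \<in> {0<..<\<sigma>s}" "y \<in> {0<..<\<sigma>s}" "x \<le> y"
    let ?a = "x powr k" and ?b = "y powr k"
    have ab: "0 < ?a" "?a \<le> ?b" "?b < FT"
      using xy k \<sigma>s by (auto intro!: powr_less_mono2 powr_mono2 simp del: \<open>\<sigma>s powr k = FT\<close>)
    have "?a < FT" "0 < ?b" using ab by linarith+
    then have ra: "Finv f ?a > T" "Fint f (Finv f ?a) = ?a" using rng[of ?a] ab(1) by auto
    have rb: "Finv f ?b > T" "Fint f (Finv f ?b) = ?b" using rng[of ?b] ab \<open>0 < ?b\<close> by auto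
    have "Finv f ?b \<le> Finv f ?a"
    proof (rule ccontr)
      assume "\<not> ?thesis"
      then have "Finv f ?a < Finv f ?b" by simp
      moreover have "0 < Finv f ?a" using ra T by linarith
      ultimately have "Fint f (Finv f ?b) < Fint f (Finv f ?a)" using Fstrict by blast
      then show False using ra rb ab by simp
    qed
    then have "\<psi> (Finv f ?b) \<le> \<psi> (Finv f ?a)" using \<psi>mono rb by auto
    then show "g' x \<le> g' y" using k by (simp add: g'_def)
  qed
  define Ls where "Ls = (SUP u\<in>{0<..}. ereal (Fint f u))"
  have lim: "((\<lambda>u. ereal (Fint f u)) \<longlongrightarrow> Ls) (at_right 0)"
  proof (rule order_tendstoI)
    fix a assume "a < Ls"
    then obtain u0 where u0: "u0 > 0" "a < ereal (Fint f u0)" unfolding Ls_def less_SUP_iff by auto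
    show "eventually (\<lambda>u. a < ereal (Fint f u)) (at_right 0)"
      unfolding eventually_at_right_field
    proof (intro exI[of _ u0] conjI allI impI)
      fix y :: real assume "0 < y" "y < u0"
      then have "Fint f u0 < Fint f y" using Fstrict by auto
      then show "a < ereal (Fint f y)" using u0 by (meson ereal_less_eq(3) less_imp_le order_less_le_trans)
    qed (use u0 in auto)
  next
    fix a assume "Ls < a"
    show "eventually (\<lambda>u. ereal (Fint f u) < a) (at_right 0)"
      unfolding eventually_at_right_field
    proof (intro exI[of _ 1] conjI allI impI)
      fix y :: real assume "0 < y"
      then have "ereal (Fint f y) \<le> Ls" unfolding Ls_def by (intro SUP_upper) auto
      then show "ereal (Fint f y) < a" using \<open>Ls < a\<close> by simp
    qed auto
  qed
  have "F0 f = Ls" unfolding F0_def by (rule tendsto_Lim[OF _ lim]) simp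
  moreover have "ereal FT \<le> Ls" unfolding Ls_def FT_def using T by (intro SUP_upper) auto
  ultimately have "ereal (\<sigma>s powr k) \<le> F0 f" using \<sigma>s by simp
  then show ?thesis using \<sigma>s conv by blast
qed

end
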